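(* Let $p$ be a prime, $m$ a positive integer, $e\geq2$, and $b\ge2$ an integer. Let $1\leq i\leq p^{e-1}$ be such that $i+b\leq p^e$ and $i\leq b$. Then $d_b(\mathcal{C}_i)=i+b$.
   Context: For $0\le i\le p^e$, $\mathcal{C}_i$ denotes the cyclic code $\langle (x-1)^i\rangle\subseteq \mathbb{F}_{p^m}[x]/\langle x^{p^e}-1\rangle$, with polynomials identified with their coefficient vectors in $\mathbb{F}_{p^m}^{p^e}$. For $c\in\mathbb{F}_{p^m}^{n}$, $\pi_b(c)$ is the list of the $n$ cyclically consecutive $b$-tuples $(c_j,\dots,c_{j+b-1})$ (indices mod $n$), $d_b(c,c')=d_H(\pi_b(c),\pi_b(c'))$, and $d_b(\mathcal{C})$ is the minimum of $d_b(c,c')$ over distinct $c,c'\in\mathcal{C}$. *)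

theory Defs
  imports "HOL-Computational_Algebra.Polynomial"
begin

text \<open>Words of length n over 'a are lists of length n; the word c corresponds to
  the polynomial Poly c = c_0 + c_1 x + ... + c_(n-1) x^(n-1).\<close>

definition cyc_code :: "nat \<Rightarrow> nat \<Rightarrow> ('a::field) list set" where
  "cyc_code n i = {c. length c = n \<and>
      (\<exists>g. Poly c = ([:-1, 1:] ^ i * g) mod (monom 1 n - 1))}"

definition b_read :: "nat \<Rightarrow> 'a list \<Rightarrow> 'a list list" where
  "b_read b c = map (\<lambda>j. map (\<lambda>k. c ! ((j + k) mod length c)) [0..<b]) [0..<length c]"

definition ham_dist :: "'a list \<Rightarrow> 'a list \<Rightarrow> nat" where
  "ham_dist u v = card {j. j < length u \<and> u ! j \<noteq> v ! j}"

definition b_dist :: "nat \<Rightarrow> 'a list \<Rightarrow> 'a list \<Rightarrow> nat" where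
  "b_dist b c c' = ham_dist (b_read b c) (b_read b c')"

definition min_b_dist :: "nat \<Rightarrow> 'a list set \<Rightarrow> nat" where
  "min_b_dist b C = Min {b_dist b c c' | c c'. c \<in> C \<and> c' \<in> C \<and> c \<noteq> c'}"

end

theory Submission imports Defs "HOL-Computational_Algebra.Computational_Algebra"
begin

definition PP :: "nat \<Rightarrow> (nat \<Rightarrow> 'a::comm_ring_1) \<Rightarrow> 'a poly" where
  "PP n d = (\<Sum>t<n. monom (d t) t)"

definition wt :: "nat \<Rightarrow> nat \<Rightarrow> (nat \<Rightarrow> 'a::zero) \<Rightarrow> nat" where
  "wt n b d = card {j. j < n \<and> (\<exists>t<b. d ((j+t) mod n) \<noteq> 0)}"

lemma coeff_PP: "coeff (PP n d) j = (if j < n then d j else 0)"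
  unfolding PP_def by (simp add: coeff_sum coeff_monom)


lemma CHAR_dvd_card_fin: "CHAR('a::{finite,comm_ring_1}) dvd card (UNIV :: 'a set)"
proof -
  define c where "c = CHAR('a)"
  have c0: "c > 0" unfolding c_def by (rule finite_imp_CHAR_pos) simp
  define r where "r = {(x::'a,y). \<exists>k. y = x + of_nat k}"
  have eq: "equiv UNIV r"
  proof (rule equivI)
    show "r \<subseteq> UNIV \<times> UNIV" by simp
    show "refl r" unfolding r_def refl_on_def by (auto intro: exI[of _ 0])
    show "sym r" unfolding r_def sym_def
    proof (clarify)
      fix x :: 'a and k
      have "of_nat (c*k - k) = (of_nat (c*k) - of_nat k :: 'a)" using c0 by (simp add: of_nat_diff)
      also have "\<dots> = - of_nat k" by (simp add: c_def)
      finally show "\<exists>ka. x = x + of_nat k + of_nat ka" by (intro exI[of _ "c*k-k"]) simp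
    qed
    show "trans r" unfolding r_def trans_def
    proof clarify
      fix x :: 'a and k1 k2
      show "\<exists>k. x + of_nat k1 + of_nat k2 = x + of_nat k"
        by (rule exI[of _ "k1+k2"]) (simp add: add.assoc)
    qed
  qed
  show ?thesis unfolding c_def[symmetric]
  proof (rule equiv_imp_dvd_card[OF _ eq])
    fix X assume "X \<in> UNIV // r"
    then obtain x where X: "X = r `` {x}" by (auto simp: quotient_def)
    have "X = (\<lambda>k. x + of_nat k) ` {..<c}"
    proof
      show "X \<subseteq> (\<lambda>k. x + of_nat k) ` {..<c}"
      proof
        fix y assume "y \<in> X"
        then obtain k where "y = x + of_nat k" using X r_def by auto
        moreover have "(of_nat k :: 'a) = of_nat (k mod c)"
        proof -
          have "(of_nat k :: 'a) = of_nat (c * (k div c) + k mod c)" by simp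
          also have "\<dots> = of_nat (k mod c)" by (simp only: of_nat_add of_nat_mult c_def of_nat_CHAR) simp
          finally show ?thesis .
        qed
        ultimately show "y \<in> (\<lambda>k. x + of_nat k) ` {..<c}" using c0 by auto
      qed
      show "(\<lambda>k. x + of_nat k) ` {..<c} \<subseteq> X" using X r_def by auto
    qed
    moreover have "inj_on (\<lambda>k. x + (of_nat k :: 'a)) {..<c}"
    proof (rule inj_onI)
      fix k1 k2 assume k: "k1 \<in> {..<c}" "k2 \<in> {..<c}" "x + of_nat k1 = x + (of_nat k2 :: 'a)"
      show "k1 = k2"
      proof (rule ccontr)
        assume ne: "k1 \<noteq> k2"
        have *: "\<And>a b. a < b \<Longrightarrow> b < c \<Longrightarrow> of_nat a = (of_nat b :: 'a) \<Longrightarrow> False"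
        proof -
          fix a b assume ab: "a < b" "b < c" "of_nat a = (of_nat b :: 'a)"
          hence "of_nat (b - a) = (0::'a)" by (simp add: of_nat_diff)
          hence "c dvd (b - a)" unfolding c_def using of_nat_eq_0_iff_char_dvd by blast
          thus False using ab by (meson diff_le_self dvd_imp_le le_less_trans not_less zero_less_diff)
        qed
        moreover have "of_nat k1 = (of_nat k2 :: 'a)" using k(3) by simp
        note e = this
        show False
        proof (cases "k1 < k2")
          case True thus False using *[of k1 k2] k(2) e by simp
        next
          case False hence "k2 < k1" using ne by simp
          thus False using *[of k2 k1] k(1) e by simp
        qed
      qed
    qed
    ultimately show "c dvd card X" by (simp add: card_image)
  qed simp
qed

lemma char_poly:
  fixes p m e :: nat
  assumes "prime p" "card (UNIV :: 'a::{finite,field} set) = p ^ m"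
  shows "(monom 1 (p^e) - 1 :: 'a poly) = [:-1,1:] ^ (p^e)"
proof -
  have c0: "CHAR('a) > 0" by (rule finite_imp_CHAR_pos) simp
  have pc: "prime CHAR('a)" using prime_CHAR_semidom[OF c0] .
  have "CHAR('a) dvd p ^ m" using CHAR_dvd_card_fin[where 'a='a] assms(2) by simp
  hence "CHAR('a) dvd p" using prime_dvd_power pc by blast
  hence cp: "CHAR('a) = p" using primes_dvd_imp_eq pc assms(1) by blast
  have pc2: "prime CHAR('a poly)" using pc by simp
  have "([:-1,1:] + 1 :: 'a poly) ^ (p^e) = [:-1,1:] ^ (p^e) + 1 ^ (p^e)"
    by (rule freshmans_dream'[OF pc2]) (simp add: cp)
  moreover have "([:-1,1:] + 1 :: 'a poly) = [:0,1:]" by (simp add: one_pCons)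
  moreover have "monom 1 (p^e) = ([:0,1:] :: 'a poly) ^ (p^e)" by (simp add: monom_altdef)
  ultimately show ?thesis by simp
qed

lemma dvd_pow_minus1: "(a - 1) dvd (a ^ q - (1::'a::comm_ring_1))"
proof (induction q)
  case (Suc q)
  have "a ^ Suc q - 1 = a * (a ^ q - 1) + (a - 1)" by (simp add: algebra_simps)
  thus ?case using Suc by (metis dvd_add dvd_mult dvd_refl)
qed simp

lemma monom_mod: 
  assumes "n > 0"
  shows "(monom 1 n - 1 :: 'a::comm_ring_1 poly) dvd (monom c a - monom c (a mod n))"
proof -
  have "monom c a = monom c (a mod n) * (monom 1 n) ^ (a div n)"
    by (simp add: monom_power mult_monom)
  hence "monom c a - monom c (a mod n) = monom c (a mod n) * ((monom 1 n) ^ (a div n) - 1)"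
    by (simp add: algebra_simps)
  thus ?thesis using dvd_pow_minus1 by (metis dvd_mult)
qed

lemma rot_inv: "a < n \<Longrightarrow> k < n \<Longrightarrow> ((a + k) mod n + (n - k)) mod n = (a::nat)"
proof -
  assume "a < n" "k < n"
  have "((a + k) mod n + (n - k)) mod n = (a + k + (n - k)) mod n" by (simp add: mod_add_left_eq)
  also have "a + k + (n - k) = a + n" using \<open>k < n\<close> by simp
  finally show ?thesis using \<open>a < n\<close> by simp
qed

lemma rot_inv2: "a < n \<Longrightarrow> k < n \<Longrightarrow> ((a + (n - k)) mod n + k) mod n = (a::nat)"
proof -
  assume "a < n" "k < n"
  have "((a + (n - k)) mod n + k) mod n = (a + (n - k) + k) mod n" by (simp add: mod_add_left_eq)
  also have "a + (n - k) + k = a + n" using \<open>k < n\<close> by simp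
  finally show ?thesis using \<open>a < n\<close> by simp
qed

lemma rot_dvd:
  assumes "q dvd (monom 1 n - 1 :: 'a::comm_ring_1 poly)" "q dvd PP n d" "k < n"
  shows "q dvd PP n (\<lambda>t. d ((t+k) mod n))"
proof -
  have n0: "n > 0" using assms by simp
  have "PP n (\<lambda>t. d ((t+k) mod n)) = (\<Sum>u<n. monom (d u) ((u + (n - k)) mod n))"
    unfolding PP_def
  proof (rule sum.reindex_bij_witness[of _ "\<lambda>u. (u + (n-k)) mod n" "\<lambda>t. (t+k) mod n"])
    fix a assume a: "a \<in> {..<n}"
    show "((a+k) mod n + (n-k)) mod n = a" using a assms(3) by (intro rot_inv) auto
    show "(a+k) mod n \<in> {..<n}" using n0 by simp
    show "monom (d ((a+k) mod n)) (((a+k) mod n + (n-k)) mod n) = monom (d ((a+k) mod n)) a"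
    proof -
      have "((a+k) mod n + (n-k)) mod n = a" using a assms(3) by (intro rot_inv) auto
      thus ?thesis by (simp only:)
    qed
  next
    fix a assume a: "a \<in> {..<n}"
    show "((a + (n-k)) mod n + k) mod n = a" using a assms(3) by (intro rot_inv2) auto
    show "(a + (n-k)) mod n \<in> {..<n}" using n0 by simp
  qed
  moreover have "monom 1 (n-k) * PP n d = (\<Sum>u<n. monom (d u) (u + (n - k)))"
    unfolding PP_def sum_distrib_left
  proof (rule sum.cong)
    fix u show "monom 1 (n-k) * monom (d u) u = monom (d u) (u + (n - k))"
      by (simp add: mult_monom add.commute)
  qed simp
  ultimately have E: "monom 1 (n-k) * PP n d - PP n (\<lambda>t. d ((t+k) mod n)) =
     (\<Sum>u<n. monom (d u) (u + (n - k)) - monom (d u) ((u + (n - k)) mod n))"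
    by (simp add: sum_subtractf)
  have D: "(monom 1 n - 1) dvd (\<Sum>u<n. monom (d u) (u + (n - k)) - monom (d u) ((u + (n - k)) mod n))"
    by (rule dvd_sum) (rule monom_mod[OF n0])
  have X1: "q dvd monom 1 (n-k) * PP n d - PP n (\<lambda>t. d ((t+k) mod n))"
    unfolding E by (rule dvd_trans[OF assms(1) D])
  have X2: "q dvd monom 1 (n-k) * PP n d" using assms(2) by (rule dvd_mult)
  have "q dvd monom 1 (n-k) * PP n d - (monom 1 (n-k) * PP n d - PP n (\<lambda>t. d ((t+k) mod n)))"
    by (rule dvd_diff[OF X2 X1])
  thus ?thesis by simp
qed


lemma wt_rot:
  assumes "k < n"
  shows "wt n b (\<lambda>t. d ((t+k) mod n)) \<le> wt n b d"
  unfolding wt_def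
proof (rule card_inj_on_le[where f = "\<lambda>j. (j+k) mod n"])
  show "inj_on (\<lambda>j. (j+k) mod n) {j. j < n \<and> (\<exists>t<b. d (((j+t) mod n + k) mod n) \<noteq> 0)}"
  proof (rule inj_onI)
    fix x y assume x: "x \<in> {j. j < n \<and> (\<exists>t<b. d (((j+t) mod n + k) mod n) \<noteq> 0)}"
      and y: "y \<in> {j. j < n \<and> (\<exists>t<b. d (((j+t) mod n + k) mod n) \<noteq> 0)}"
      and e: "(x+k) mod n = (y+k) mod n"
    have "((x+k) mod n + (n-k)) mod n = ((y+k) mod n + (n-k)) mod n" using e by simp
    thus "x = y" using rot_inv[of x n k] rot_inv[of y n k] x y assms by simp
  qed
  show "(\<lambda>j. (j+k) mod n) ` {j. j < n \<and> (\<exists>t<b. d (((j+t) mod n + k) mod n) \<noteq> 0)}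
        \<subseteq> {j. j < n \<and> (\<exists>t<b. d ((j+t) mod n) \<noteq> 0)}"
  proof clarify
    fix j t assume "j < n" "t < b" "d (((j+t) mod n + k) mod n) \<noteq> 0"
    moreover have "((j+t) mod n + k) mod n = ((j + k) mod n + t) mod n"
    proof -
      have "((j+t) mod n + k) mod n = (j+t+k) mod n" by (rule mod_add_left_eq)
      moreover have "((j+k) mod n + t) mod n = (j+k+t) mod n" by (rule mod_add_left_eq)
      moreover have "j+t+k = j+k+t" by simp
      ultimately show ?thesis by simp
    qed
    ultimately show "(j+k) mod n < n \<and> (\<exists>t<b. d (((j+k) mod n + t) mod n) \<noteq> 0)"
      using assms by auto
  qed
qed simp

lemma lower:
  fixes d :: "nat \<Rightarrow> 'a::field"
  assumes qM: "[:-1,1:]^i dvd (monom 1 n - 1 :: 'a poly)"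
    and qd: "[:-1,1:]^i dvd PP n d"
    and nz: "t0 < n" "d t0 \<noteq> 0"
    and ib: "i \<le> b" and ibn: "i + b \<le> n" and b0: "b > 0"
  shows "i + b \<le> wt n b d"
proof (cases "\<forall>j<n. \<exists>t<b. d ((j+t) mod n) \<noteq> 0")
  case True
  then have "{j. j < n \<and> (\<exists>t<b. d ((j+t) mod n) \<noteq> 0)} = {..<n}" by auto
  thus ?thesis using ibn by (simp add: wt_def)
next
  case False
  have n0: "n > 0" using nz by simp
  from False obtain j0 where j0: "j0 < n" "\<And>t. t < b \<Longrightarrow> d ((j0+t) mod n) = 0" by auto
  define P where "P = (\<lambda>u. d ((j0+b+u) mod n) \<noteq> 0)"
  have "P (n*(j0+b) - (j0+b) + t0)"
  proof -
    have "1 * (j0+b) \<le> n*(j0+b)" using n0 by (intro mult_le_mono1) simp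
    hence le: "j0+b \<le> n*(j0+b)" by simp
    have "j0+b+(n*(j0+b) - (j0+b) + t0) = t0 + (j0+b) * n"
    proof -
      have "j0+b+(n*(j0+b) - (j0+b) + t0) = n*(j0+b) + t0" using le by arith
      thus ?thesis by (simp only: mult.commute add.commute)
    qed
    hence "(j0+b+(n*(j0+b) - (j0+b) + t0)) mod n = t0" using nz(1) by simp
    thus ?thesis using nz(2) unfolding P_def by simp
  qed
  hence Pu: "P (LEAST u. P u)" by (rule LeastI)
  define u where "u = (LEAST u. P u)"
  have Pu': "P u" using Pu u_def by simp
  have lt: "\<And>w. w < u \<Longrightarrow> \<not> P w" unfolding u_def by (rule not_less_Least)
  define k where "k = (j0+b+u) mod n"
  have kn: "k < n" using n0 k_def by simp
  define d' where "d' = (\<lambda>t. d ((t+k) mod n))"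
  have d'0: "d' 0 \<noteq> 0" using Pu' unfolding d'_def k_def P_def by simp
  have d'z: "d' (n-b+v) = 0" if v: "v < b" for v
  proof -
    have "(n-b+v+k) mod n = (n-b+v+(j0+b+u)) mod n" unfolding k_def by (simp add: mod_add_right_eq)
    also have "n-b+v+(j0+b+u) = (j0+(u+v)) + n" using ibn ib by simp
    finally have e: "(n-b+v+k) mod n = (j0+(u+v)) mod n" by simp
    show ?thesis
    proof (cases "u + v < b")
      case True
      have "d ((j0 + (u + v)) mod n) = 0" using j0(2)[of "u+v"] True by blast
      thus ?thesis using e unfolding d'_def by simp
    next
      case False
      hence "u+v-b < u" "j0+b+(u+v-b) = j0+(u+v)" using v by auto
      thus ?thesis using lt[of "u+v-b"] e unfolding d'_def P_def by simp
    qed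
  qed
  have dvd': "[:-1,1:]^i dvd PP n d'" unfolding d'_def by (rule rot_dvd[OF qM qd kn])
  have ne: "PP n d' \<noteq> 0"
  proof
    assume "PP n d' = 0"
    hence "coeff (PP n d') 0 = 0" by simp
    thus False using d'0 n0 by (simp add: coeff_PP)
  qed
  define s where "s = degree (PP n d')"
  have cs: "coeff (PP n d') s \<noteq> 0" using ne s_def by simp
  have sn: "s < n" using cs by (simp add: coeff_PP split: if_splits)
  have ds: "d' s \<noteq> 0" using cs sn by (simp add: coeff_PP)
  have s_lt: "s < n - b"
  proof (rule ccontr)
    assume "\<not> s < n - b"
    hence "s = n - b + (s - (n - b))" "s - (n-b) < b" using sn by auto
    thus False using d'z[of "s - (n-b)"] ds by simp
  qed
  have is_: "i \<le> s"
    using dvd_imp_degree_le[OF dvd' ne] unfolding s_def by (simp add: degree_linear_power)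
  define A where "A = {s+1-i..s} \<union> ({n+1-b..<n} \<union> {0})"
  have AW: "A \<subseteq> {j. j < n \<and> (\<exists>t<b. d' ((j+t) mod n) \<noteq> 0)}"
  proof
    fix j assume "j \<in> A"
    then consider "j \<in> {s+1-i..s}" | "j \<in> {n+1-b..<n}" | "j = 0" unfolding A_def by blast
    thus "j \<in> {j. j < n \<and> (\<exists>t<b. d' ((j+t) mod n) \<noteq> 0)}"
    proof cases
      case 1
      hence "j < n" "s - j < b" "(j + (s - j)) mod n = s" using sn ib is_ by auto
      thus ?thesis using ds by (intro CollectI conjI exI[of _ "s-j"]) auto
    next
      case 2
      hence "j < n" "n - j < b" "(j + (n - j)) mod n = 0" by auto
      thus ?thesis using d'0 by (intro CollectI conjI exI[of _ "n-j"]) auto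
    next
      case 3
      thus ?thesis using d'0 b0 n0 by auto
    qed
  qed
  have "card A = i + b"
  proof -
    have "card ({n+1-b..<n} \<union> {0}) = b"
      using b0 ibn by (subst card_Un_disjoint) auto
    moreover have "card {s+1-i..s} = i" using is_ by simp
    moreover have "{s+1-i..s} \<inter> ({n+1-b..<n} \<union> {0}) = {}" using is_ s_lt by auto
    ultimately show ?thesis unfolding A_def by (subst card_Un_disjoint) auto
  qed
  moreover have fin: "finite {j. j < n \<and> (\<exists>t<b. d' ((j+t) mod n) \<noteq> 0)}" by simp
  have "card A \<le> wt n b d'" unfolding wt_def by (rule card_mono[OF fin AW])
  ultimately have "i + b \<le> wt n b d'" by simp
  also have "\<dots> \<le> wt n b d" unfolding d'_def by (rule wt_rot[OF kn])
  finally show ?thesis .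
qed


lemma Poly_PP: "length c = n \<Longrightarrow> Poly c = PP n (\<lambda>t. c ! t)"
  by (simp add: poly_eq_iff coeff_PP nth_default_def)

lemma bdist_wt:
  fixes c c' :: "'a::ab_group_add list"
  assumes "length c = n" "length c' = n"
  shows "b_dist b c c' = wt n b (\<lambda>t. c!t - c'!t)"
proof -
  have "{j. j < length (b_read b c) \<and> b_read b c ! j \<noteq> b_read b c' ! j}
      = {j. j < n \<and> (\<exists>t<b. c ! ((j+t) mod n) - c' ! ((j+t) mod n) \<noteq> 0)}"
  proof (rule Collect_cong)
    fix j
    have lb: "length (b_read b c) = n" using assms by (simp add: b_read_def)
    have "j < n \<Longrightarrow> (b_read b c ! j \<noteq> b_read b c' ! j) =
          (\<exists>t<b. c ! ((j+t) mod n) \<noteq> c' ! ((j+t) mod n))"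
      using assms by (auto simp: b_read_def)
    moreover have "\<And>x y::'a. (x - y \<noteq> 0) = (x \<noteq> y)" by simp
    ultimately show "(j < length (b_read b c) \<and> b_read b c ! j \<noteq> b_read b c' ! j) =
          (j < n \<and> (\<exists>t<b. c ! ((j+t) mod n) - c' ! ((j+t) mod n) \<noteq> 0))"
      using lb by auto
  qed
  thus ?thesis unfolding b_dist_def ham_dist_def wt_def by simp
qed

lemma wt_le: "wt n b d \<le> n"
proof -
  have "wt n b d \<le> card {..<n}" unfolding wt_def by (rule card_mono) auto
  thus ?thesis by simp
qed

lemma cyc_dvd:
  assumes "c \<in> cyc_code n i" "q = [:-1,1:]^i" "q dvd (monom 1 n - 1 :: 'a::field poly)"
  shows "q dvd Poly c"
proof -
  obtain g where g: "Poly c = ([:-1, 1:] ^ i * g) mod (monom 1 n - 1)"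
    using assms(1) unfolding cyc_code_def by auto
  show ?thesis unfolding g using dvd_mod_iff[OF assms(3)] assms(2) by simp
qed

theorem theorem2p8:
  fixes p m e b i :: nat
  assumes "prime p" and "m > 0" and "card (UNIV :: 'a::{finite,field} set) = p ^ m"
    and "e \<ge> 2" and "b \<ge> 2"
    and "1 \<le> i" and "i \<le> p ^ (e - 1)" and "i + b \<le> p ^ e" and "i \<le> b"
  shows "min_b_dist b (cyc_code (p ^ e) i :: 'a list set) = i + b"
proof -
  define n where "n = p ^ e"
  define q where "q = ([:-1,1:] ^ i :: 'a poly)"
  have n0: "n > 0" using prime_gt_0_nat[OF assms(1)] n_def by simp
  have ibn: "i + b \<le> n" using assms(8) n_def by simp
  have M: "(monom 1 n - 1 :: 'a poly) = [:-1,1:] ^ n"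
    unfolding n_def by (rule char_poly[OF assms(1) assms(3)])
  have qM: "q dvd (monom 1 n - 1 :: 'a poly)" unfolding M q_def
    by (rule le_imp_power_dvd) (use ibn in simp)
  have degq: "degree q = i" unfolding q_def by (simp add: degree_linear_power)
  define S where "S = {b_dist b c c' | c c'. c \<in> (cyc_code n i :: 'a list set) \<and> c' \<in> cyc_code n i \<and> c \<noteq> c'}"
  have low: "i + b \<le> y" if "y \<in> S" for y
  proof -
    obtain c c' where cc: "y = b_dist b c c'" "c \<in> (cyc_code n i :: 'a list set)" "c' \<in> cyc_code n i" "c \<noteq> c'"
      using \<open>y \<in> S\<close> unfolding S_def by auto
    have len: "length c = n" "length c' = n" using cc unfolding cyc_code_def by auto
    have d1: "q dvd Poly c" "q dvd Poly c'" using cyc_dvd[OF _ q_def qM] cc by auto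
    have "PP n (\<lambda>t. c!t - c'!t) = Poly c - Poly c'"
      using len by (simp add: poly_eq_iff coeff_PP nth_default_def)
    hence dv: "q dvd PP n (\<lambda>t. c!t - c'!t)" using d1 by simp
    obtain t0 where t0: "t0 < n" "c!t0 \<noteq> c'!t0" using cc(4) len nth_equalityI by metis
    have "i + b \<le> wt n b (\<lambda>t. c!t - c'!t)"
      by (rule lower[OF qM[unfolded q_def] dv[unfolded q_def], of t0]) (use t0 assms ibn in auto)
    thus ?thesis using cc(1) bdist_wt[OF len] by simp
  qed
  define c0 where "c0 = map (coeff q) [0..<n]"
  define z where "z = (replicate n 0 :: 'a list)"
  have Pc0: "Poly c0 = q"
  proof (rule poly_eqI)
    fix t
    show "coeff (Poly c0) t = coeff q t"
    proof (cases "t < n")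
      case True thus ?thesis by (simp add: c0_def nth_default_def)
    next
      case False
      hence "degree q < t" using degq ibn assms(5) by simp
      thus ?thesis using False by (simp add: c0_def nth_default_def coeff_eq_0)
    qed
  qed
  have c0C: "c0 \<in> cyc_code n i" unfolding cyc_code_def
  proof (intro CollectI conjI exI[of _ 1])
    show "length c0 = n" by (simp add: c0_def)
    have "degree q < degree (monom 1 n - 1 :: 'a poly)" unfolding M using degq ibn assms(5)
      by (simp add: degree_linear_power)
    thus "Poly c0 = ([:-1, 1:] ^ i * 1) mod (monom 1 n - 1)"
      using Pc0 by (simp add: mod_poly_less q_def)
  qed
  have zC: "z \<in> cyc_code n i" unfolding cyc_code_def z_def
    by (intro CollectI conjI exI[of _ 0]) auto
  have ne: "c0 \<noteq> z"
  proof
    assume "c0 = z"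
    hence "Poly c0 = 0" by (simp add: z_def)
    thus False using Pc0 q_def by simp
  qed
  have lenc0: "length c0 = n" "length z = n" by (simp_all add: c0_def z_def)
  have inS: "b_dist b c0 z \<in> S" unfolding S_def using c0C zC ne by blast
  have up: "b_dist b c0 z \<le> i + b"
  proof -
    have "b_dist b c0 z = wt n b (\<lambda>t. c0!t - z!t)" by (rule bdist_wt[OF lenc0])
    also have "\<dots> \<le> card ({..i} \<union> {n+1-b..<n})" unfolding wt_def
    proof (rule card_mono)
      show "{j. j < n \<and> (\<exists>t<b. c0 ! ((j + t) mod n) - z ! ((j + t) mod n) \<noteq> 0)} \<subseteq> {..i} \<union> {n+1-b..<n}"
      proof
        fix j assume "j \<in> {j. j < n \<and> (\<exists>t<b. c0 ! ((j + t) mod n) - z ! ((j + t) mod n) \<noteq> 0)}"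
        then obtain t where j: "j < n" "t < b" "c0 ! ((j + t) mod n) - z ! ((j + t) mod n) \<noteq> 0"
          by blast
        have "coeff q ((j + t) mod n) \<noteq> 0" using j(3) n0 by (simp add: c0_def z_def)
        hence le: "(j+t) mod n \<le> i" using degq le_degree by blast
        show "j \<in> {..i} \<union> {n+1-b..<n}"
        proof (cases "j + t < n")
          case True
          hence "j \<le> i" using le by simp
          thus ?thesis by simp
        next
          case False
          hence "n+1-b \<le> j" using j(2) by linarith
          thus ?thesis using j(1) by simp
        qed
      qed
    qed simp
    also have "\<dots> \<le> card {..i} + card {n+1-b..<n}" by (rule card_Un_le)
    also have "\<dots> = i + b" using assms(5) ibn by simp
    finally show ?thesis .
  qed
  have "Min S = i + b"
  proof (rule Min_eqI)
    show "finite S"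
    proof (rule finite_subset[of _ "{..n}"])
      show "S \<subseteq> {..n}"
      proof
        fix y assume "y \<in> S"
        then obtain c c' where cc: "y = b_dist b c c'" "c \<in> (cyc_code n i :: 'a list set)" "c' \<in> cyc_code n i"
          unfolding S_def by auto
        have len: "length c = n" "length c' = n" using cc unfolding cyc_code_def by auto
        show "y \<in> {..n}" using cc(1) bdist_wt[OF len] wt_le by simp
      qed
    qed simp
    show "\<And>y. y \<in> S \<Longrightarrow> i + b \<le> y" by (rule low)
    show "i + b \<in> S" using inS up low[OF inS] by simp
  qed
  thus ?thesis unfolding min_b_dist_def S_def n_def .
qed

end
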